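(* Let $(X_i)_{i\in I}$ be a family of zero-dimensional coherent domains and $F\subseteq\prod_{i\in I}\mathcal V_{\le1}(X_i)\subseteq\prod_{i\in I}\mathcal V(X_i)$ a finite set. Then $\mathrm{conv}\,F$ is Lawson-compact in $\prod_{i\in I}\mathcal V(X_i)$.
   Context: A domain is a continuous dcpo; coherent means the intersection of two compact saturated subsets is compact; zero-dimensional means the Scott topology has a basis of clopens. $\mathcal V(X)$ is the set of continuous valuations on $X$ (strict, monotone, modular maps from Scott-opens to $[0,\infty]$ preserving directed unions), ordered pointwise, with pointwise addition and scaling; $\mathcal V_{\le1}(X)$ those with $\mu(X)\le1$. Products carry the componentwise order and operations. $\mathrm{conv}\,F$ denotes the set of finite convex combinations of elements of $F$. The Lawson topology is generated by the Scott-open sets and the complements of principal up-sets ${\uparrow}x$. *)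

theory Defs
  imports "HOL-Analysis.Analysis"
begin

definition poset_on :: "'a set \<Rightarrow> ('a \<Rightarrow> 'a \<Rightarrow> bool) \<Rightarrow> bool" where
  "poset_on S le \<longleftrightarrow>
     (\<forall>x\<in>S. le x x) \<and>
     (\<forall>x\<in>S. \<forall>y\<in>S. le x y \<and> le y x \<longrightarrow> x = y) \<and>
     (\<forall>x\<in>S. \<forall>y\<in>S. \<forall>z\<in>S. le x y \<and> le y z \<longrightarrow> le x z)"

definition directed_on :: "'a set \<Rightarrow> ('a \<Rightarrow> 'a \<Rightarrow> bool) \<Rightarrow> 'a set \<Rightarrow> bool" where
  "directed_on S le D \<longleftrightarrow> D \<noteq> {} \<and> D \<subseteq> S \<and>
     (\<forall>x\<in>D. \<forall>y\<in>D. \<exists>z\<in>D. le x z \<and> le y z)"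

definition is_lub_on :: "'a set \<Rightarrow> ('a \<Rightarrow> 'a \<Rightarrow> bool) \<Rightarrow> 'a set \<Rightarrow> 'a \<Rightarrow> bool" where
  "is_lub_on S le D s \<longleftrightarrow> s \<in> S \<and> (\<forall>d\<in>D. le d s) \<and>
     (\<forall>u\<in>S. (\<forall>d\<in>D. le d u) \<longrightarrow> le s u)"

definition dcpo_on :: "'a set \<Rightarrow> ('a \<Rightarrow> 'a \<Rightarrow> bool) \<Rightarrow> bool" where
  "dcpo_on S le \<longleftrightarrow> poset_on S le \<and>
     (\<forall>D. directed_on S le D \<longrightarrow> (\<exists>s. is_lub_on S le D s))"

definition way_below :: "'a set \<Rightarrow> ('a \<Rightarrow> 'a \<Rightarrow> bool) \<Rightarrow> 'a \<Rightarrow> 'a \<Rightarrow> bool" where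
  "way_below S le x y \<longleftrightarrow> x \<in> S \<and> y \<in> S \<and>
     (\<forall>D s. directed_on S le D \<longrightarrow> is_lub_on S le D s \<longrightarrow> le y s \<longrightarrow> (\<exists>d\<in>D. le x d))"

definition domain_on :: "'a set \<Rightarrow> ('a \<Rightarrow> 'a \<Rightarrow> bool) \<Rightarrow> bool" where
  "domain_on S le \<longleftrightarrow> dcpo_on S le \<and>
     (\<forall>y\<in>S. directed_on S le {x\<in>S. way_below S le x y} \<and>
             is_lub_on S le {x\<in>S. way_below S le x y} y)"

definition upper_set_on :: "'a set \<Rightarrow> ('a \<Rightarrow> 'a \<Rightarrow> bool) \<Rightarrow> 'a set \<Rightarrow> bool" where
  "upper_set_on S le U \<longleftrightarrow> U \<subseteq> S \<and> (\<forall>x\<in>U. \<forall>y\<in>S. le x y \<longrightarrow> y \<in> U)"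

definition scott_open :: "'a set \<Rightarrow> ('a \<Rightarrow> 'a \<Rightarrow> bool) \<Rightarrow> 'a set \<Rightarrow> bool" where
  "scott_open S le U \<longleftrightarrow> upper_set_on S le U \<and>
     (\<forall>D s. directed_on S le D \<longrightarrow> is_lub_on S le D s \<longrightarrow> s \<in> U \<longrightarrow> D \<inter> U \<noteq> {})"

definition scott_topology :: "'a set \<Rightarrow> ('a \<Rightarrow> 'a \<Rightarrow> bool) \<Rightarrow> 'a topology" where
  "scott_topology S le = topology_generated_by {U. scott_open S le U}"

definition up_on :: "'a set \<Rightarrow> ('a \<Rightarrow> 'a \<Rightarrow> bool) \<Rightarrow> 'a \<Rightarrow> 'a set" where
  "up_on S le x = {y\<in>S. le x y}"

definition lawson_topology :: "'a set \<Rightarrow> ('a \<Rightarrow> 'a \<Rightarrow> bool) \<Rightarrow> 'a topology" where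
  "lawson_topology S le = topology_generated_by
     ({U. scott_open S le U} \<union> {S - up_on S le x | x. x \<in> S})"

definition saturatedin :: "'a topology \<Rightarrow> 'a set \<Rightarrow> bool" where
  "saturatedin T K \<longleftrightarrow> K \<subseteq> topspace T \<and>
     K = topspace T \<inter> \<Inter>{U. openin T U \<and> K \<subseteq> U}"

definition coherent_top :: "'a topology \<Rightarrow> bool" where
  "coherent_top T \<longleftrightarrow> (\<forall>K L. compactin T K \<and> saturatedin T K \<and> compactin T L \<and> saturatedin T L
      \<longrightarrow> compactin T (K \<inter> L))"

definition zero_dimensional_top :: "'a topology \<Rightarrow> bool" where
  "zero_dimensional_top T \<longleftrightarrow> (\<exists>B. (\<forall>b\<in>B. openin T b \<and> closedin T b) \<and>
      (\<forall>U. openin T U \<longrightarrow> U = \<Union>{b\<in>B. b \<subseteq> U}))"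

text \<open>A continuous valuation on the Scott-open sets of (S, le), represented as a total function
  on sets which is 0 on non-Scott-open sets.\<close>
definition cont_valuation :: "'a set \<Rightarrow> ('a \<Rightarrow> 'a \<Rightarrow> bool) \<Rightarrow> ('a set \<Rightarrow> ennreal) \<Rightarrow> bool" where
  "cont_valuation S le \<mu> \<longleftrightarrow>
     (\<forall>U. \<not> scott_open S le U \<longrightarrow> \<mu> U = 0) \<and>
     \<mu> {} = 0 \<and>
     (\<forall>U V. scott_open S le U \<and> scott_open S le V \<and> U \<subseteq> V \<longrightarrow> \<mu> U \<le> \<mu> V) \<and>
     (\<forall>U V. scott_open S le U \<and> scott_open S le V \<longrightarrow> \<mu> U + \<mu> V = \<mu> (U \<union> V) + \<mu> (U \<inter> V)) \<and>
     (\<forall>\<D>. \<D> \<noteq> {} \<and> (\<forall>U\<in>\<D>. scott_open S le U) \<and>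
          (\<forall>U\<in>\<D>. \<forall>V\<in>\<D>. \<exists>W\<in>\<D>. U \<subseteq> W \<and> V \<subseteq> W)
          \<longrightarrow> \<mu> (\<Union>\<D>) = (SUP U\<in>\<D>. \<mu> U))"

text \<open>The product \<Prod>i\<in>I. V(X i), elements extensional (zero valuation outside I).\<close>
definition prod_val :: "'i set \<Rightarrow> ('i \<Rightarrow> 'a set) \<Rightarrow> ('i \<Rightarrow> 'a \<Rightarrow> 'a \<Rightarrow> bool)
    \<Rightarrow> ('i \<Rightarrow> 'a set \<Rightarrow> ennreal) set" where
  "prod_val I X R = {\<nu>. (\<forall>i\<in>I. cont_valuation (X i) (R i) (\<nu> i)) \<and> (\<forall>i. i \<notin> I \<longrightarrow> \<nu> i = (\<lambda>_. 0))}"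

definition prod_val_le :: "('i \<Rightarrow> 'a set \<Rightarrow> ennreal) \<Rightarrow> ('i \<Rightarrow> 'a set \<Rightarrow> ennreal) \<Rightarrow> bool" where
  "prod_val_le \<nu> \<nu>' \<longleftrightarrow> (\<forall>i U. \<nu> i U \<le> \<nu>' i U)"

definition conv_hull_val :: "('i \<Rightarrow> 'a set \<Rightarrow> ennreal) set \<Rightarrow> ('i \<Rightarrow> 'a set \<Rightarrow> ennreal) set" where
  "conv_hull_val F = {(\<lambda>i U. \<Sum>k<n. ennreal (c k) * g k i U) | (n::nat) (c::nat \<Rightarrow> real) g.
      (\<forall>k<n. g k \<in> F \<and> c k \<ge> 0) \<and> (\<Sum>k<n. c k) = (1::real)}"

end

theory Submission
  imports Defs
begin

lemma cv_zero: "cont_valuation S le (\<lambda>_. 0)"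
  unfolding cont_valuation_def by simp

lemma cv_mono: "cont_valuation S le \<mu> \<Longrightarrow> scott_open S le U \<Longrightarrow> scott_open S le V \<Longrightarrow> U \<subseteq> V \<Longrightarrow> \<mu> U \<le> \<mu> V"
  unfolding cont_valuation_def by blast

lemma cv_dir: "cont_valuation S le \<mu> \<Longrightarrow> \<D> \<noteq> {} \<Longrightarrow> (\<forall>U\<in>\<D>. scott_open S le U) \<Longrightarrow>
          (\<forall>U\<in>\<D>. \<forall>V\<in>\<D>. \<exists>W\<in>\<D>. U \<subseteq> W \<and> V \<subseteq> W) \<Longrightarrow> \<mu> (\<Union>\<D>) = (SUP U\<in>\<D>. \<mu> U)"
  unfolding cont_valuation_def by (elim conjE) (drule spec[of _ \<D>], erule mp, simp)
lemma cv_mod: "cont_valuation S le \<mu> \<Longrightarrow> scott_open S le U \<Longrightarrow> scott_open S le V \<Longrightarrow> \<mu> U + \<mu> V = \<mu> (U \<union> V) + \<mu> (U \<inter> V)"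
  unfolding cont_valuation_def by (elim conjE) (drule spec[of _ U], drule spec[of _ V], simp)
lemma cv_zero': "cont_valuation S le \<mu> \<Longrightarrow> \<not> scott_open S le U \<Longrightarrow> \<mu> U = 0"
  unfolding cont_valuation_def by (elim conjE) simp
lemma cv_empty: "cont_valuation S le \<mu> \<Longrightarrow> \<mu> {} = 0"
  unfolding cont_valuation_def by (elim conjE) simp

lemma cv_intro:
  assumes "\<And>U. \<not> scott_open S le U \<Longrightarrow> \<mu> U = 0" "\<mu> {} = 0"
    "\<And>U V. scott_open S le U \<Longrightarrow> scott_open S le V \<Longrightarrow> U \<subseteq> V \<Longrightarrow> \<mu> U \<le> \<mu> V"
    "\<And>U V. scott_open S le U \<Longrightarrow> scott_open S le V \<Longrightarrow> \<mu> U + \<mu> V = \<mu> (U \<union> V) + \<mu> (U \<inter> V)"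
    "\<And>\<D>. \<D> \<noteq> {} \<Longrightarrow> (\<forall>U\<in>\<D>. scott_open S le U) \<Longrightarrow>
          (\<forall>U\<in>\<D>. \<forall>V\<in>\<D>. \<exists>W\<in>\<D>. U \<subseteq> W \<and> V \<subseteq> W) \<Longrightarrow> \<mu> (\<Union>\<D>) = (SUP U\<in>\<D>. \<mu> U)"
  shows "cont_valuation S le \<mu>"
  unfolding cont_valuation_def
  apply (intro conjI allI impI)
      apply (rule assms(1); simp)
     apply (rule assms(2))
    apply (rule assms(3); simp)
   apply (rule assms(4); simp)
  apply (rule assms(5); simp)
  done

lemma cv_add:
  assumes a: "cont_valuation S le \<mu>" and b: "cont_valuation S le \<nu>"
  shows "cont_valuation S le (\<lambda>U. \<mu> U + \<nu> U)"
proof (rule cv_intro)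
  fix \<D> :: "'a set set"
  assume h: "\<D> \<noteq> {}" "\<forall>U\<in>\<D>. scott_open S le U" "\<forall>U\<in>\<D>. \<forall>V\<in>\<D>. \<exists>W\<in>\<D>. U \<subseteq> W \<and> V \<subseteq> W"
  have "(SUP U\<in>\<D>. \<mu> U + \<nu> U) = (SUP U\<in>\<D>. \<mu> U) + (SUP U\<in>\<D>. \<nu> U)"
  proof (rule SUP_add_directed_ennreal)
    fix U V assume UV: "U \<in> \<D>" "V \<in> \<D>"
    then obtain W where W: "W \<in> \<D>" "U \<subseteq> W" "V \<subseteq> W" using h(3) by blast
    have "\<mu> U \<le> \<mu> W" using cv_mono[OF a _ _ W(2)] h(2) UV W(1) by blast
    moreover have "\<nu> V \<le> \<nu> W" using cv_mono[OF b _ _ W(3)] h(2) UV W(1) by blast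
    ultimately show "\<exists>k\<in>\<D>. \<mu> U + \<nu> V \<le> \<mu> k + \<nu> k" using W(1) by (intro bexI[of _ W] add_mono)
  qed
  then show "\<mu> (\<Union>\<D>) + \<nu> (\<Union>\<D>) = (SUP U\<in>\<D>. \<mu> U + \<nu> U)"
    using cv_dir[OF a h] cv_dir[OF b h] by simp
next
  fix U V assume "scott_open S le U" "scott_open S le V"
  then show "\<mu> U + \<nu> U + (\<mu> V + \<nu> V) = \<mu> (U \<union> V) + \<nu> (U \<union> V) + (\<mu> (U \<inter> V) + \<nu> (U \<inter> V))"
    using cv_mod[OF a] cv_mod[OF b] by (simp add: algebra_simps)
next
  fix U V assume "scott_open S le U" "scott_open S le V" "U \<subseteq> V"
  then show "\<mu> U + \<nu> U \<le> \<mu> V + \<nu> V"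
    using cv_mono[OF a] cv_mono[OF b] by (simp add: add_mono)
qed (simp_all add: cv_zero'[OF a] cv_zero'[OF b] cv_empty[OF a] cv_empty[OF b])

lemma cv_scale:
  assumes a: "cont_valuation S le \<mu>"
  shows "cont_valuation S le (\<lambda>U. r * \<mu> U)"
proof (rule cv_intro)
  fix \<D> :: "'a set set"
  assume h: "\<D> \<noteq> {}" "\<forall>U\<in>\<D>. scott_open S le U" "\<forall>U\<in>\<D>. \<forall>V\<in>\<D>. \<exists>W\<in>\<D>. U \<subseteq> W \<and> V \<subseteq> W"
  show "r * \<mu> (\<Union>\<D>) = (SUP U\<in>\<D>. r * \<mu> U)"
    using cv_dir[OF a h] by (simp add: SUP_mult_left_ennreal)
next
  fix U V assume "scott_open S le U" "scott_open S le V"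
  then show "r * \<mu> U + r * \<mu> V = r * \<mu> (U \<union> V) + r * \<mu> (U \<inter> V)"
    using cv_mod[OF a] by (metis distrib_left)
next
  fix U V assume "scott_open S le U" "scott_open S le V" "U \<subseteq> V"
  then show "r * \<mu> U \<le> r * \<mu> V"
    using cv_mono[OF a] by (simp add: mult_left_mono)
qed (simp_all add: cv_zero'[OF a] cv_empty[OF a])

lemma cv_comb:
  fixes m :: nat
  assumes "\<forall>k<m. cont_valuation S le (\<mu> k)"
  shows "cont_valuation S le (\<lambda>U. \<Sum>k<m. r k * \<mu> k U)"
  using assms
proof (induction m)
  case 0 then show ?case by (simp add: cv_zero)
next
  case (Suc m)
  then show ?case using cv_add[OF Suc.IH cv_scale[of S le "\<mu> m" "r m"]] by simp
qed

definition comb :: "(nat \<Rightarrow> 'i \<Rightarrow> 'a set \<Rightarrow> ennreal) \<Rightarrow> nat \<Rightarrow> (nat \<Rightarrow> real) \<Rightarrow> 'i \<Rightarrow> 'a set \<Rightarrow> ennreal" where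
  "comb h m c = (\<lambda>i U. \<Sum>k<m. ennreal (c k) * h k i U)"

lemma comb_in_prod_val:
  assumes "\<forall>k<m. h k \<in> prod_val I X R"
  shows "comb h m c \<in> prod_val I X R"
  using assms unfolding prod_val_def comb_def
  by (auto intro!: cv_comb)

definition smplx :: "nat \<Rightarrow> (nat \<Rightarrow> real) set" where
  "smplx m = {x. (\<forall>i. 0 \<le> x i \<and> x i \<le> 1) \<and> (\<forall>i\<ge>m. x i = 0) \<and> (\<Sum>i<m. x i) = 1}"

lemma compactin_smplx:
  "compactin (product_topology (\<lambda>i. euclideanreal) UNIV) (smplx m)"
    (is "compactin ?X ?S")
proof (rule closed_compactin)
  show "compactin ?X (UNIV \<rightarrow>\<^sub>E {0..1})"
    by (simp add: compactin_PiE)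
  show "smplx m \<subseteq> UNIV \<rightarrow>\<^sub>E {0..1}"
    by (auto simp: smplx_def)
  have eq: "smplx m =
              (\<Inter>i. {x. x \<in> topspace ?X \<and> x i \<in> {0..1}}) \<inter>
              (\<Inter>i \<in> {m..}. {x \<in> topspace ?X. x i \<in> {0}}) \<inter>
              {x \<in> topspace ?X. (\<Sum>i<m. x i) \<in> {1}}"
    by (auto simp: smplx_def topspace_product_topology)
  show "closedin ?X (smplx m)"
    unfolding eq
    by (rule closedin_Int closedin_Inter continuous_map_sum
             continuous_map_product_projection closedin_continuous_map_preimage | force | clarify)+
qed

lemma scott_open_whole: "scott_open S le S"
  unfolding scott_open_def upper_set_on_def directed_on_def by blast

lemma prod_val_bound:
  assumes "\<nu> \<in> prod_val I X R" "\<forall>i\<in>I. \<nu> i (X i) \<le> 1"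
  shows "\<nu> i U \<le> 1"
proof (cases "i \<in> I")
  case True
  then have cv: "cont_valuation (X i) (R i) (\<nu> i)" using assms unfolding prod_val_def by blast
  show ?thesis
  proof (cases "scott_open (X i) (R i) U")
    case True
    then have "U \<subseteq> X i" unfolding scott_open_def upper_set_on_def by blast
    then have "\<nu> i U \<le> \<nu> i (X i)" using cv_mono[OF cv True scott_open_whole] by blast
    then show ?thesis using assms \<open>i \<in> I\<close> by (meson order.trans)
  next
    case False then show ?thesis using cv unfolding cont_valuation_def by simp
  qed
next
  case False then show ?thesis using assms unfolding prod_val_def by simp
qed

lemma comb_mono:
  assumes "\<forall>k<m. 0 \<le> a k \<and> a k \<le> b k"
  shows "prod_val_le (comb h m a) (comb h m b)"
  unfolding prod_val_le_def comb_def
  using assms by (auto intro!: sum_mono mult_right_mono ennreal_leI)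

lemma comb_real:
  assumes "\<forall>k. 0 \<le> c k" "\<forall>k<m. \<forall>i U. h k i U \<le> 1"
  shows "comb h m c i U = ennreal (\<Sum>k<m. c k * enn2real (h k i U))"
proof -
  have "ennreal (c k) * h k i U = ennreal (c k * enn2real (h k i U))" if "k < m" for k
  proof -
    have "h k i U < top" using assms(2) that by (metis ennreal_one_less_top le_less_trans)
    then show ?thesis using assms(1) by (simp add: ennreal_mult)
  qed
  then have "comb h m c i U = (\<Sum>k<m. ennreal (c k * enn2real (h k i U)))"
    unfolding comb_def by simp
  also have "\<dots> = ennreal (\<Sum>k<m. c k * enn2real (h k i U))"
    using assms(1) by (intro sum_ennreal) simp
  finally show ?thesis .
qed

lemma conv_eq:
  assumes hb: "bij_betw h {..<m} F"
  shows "conv_hull_val F = comb h m ` smplx m"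
proof
  show "comb h m ` smplx m \<subseteq> conv_hull_val F"
  proof
    fix y assume "y \<in> comb h m ` smplx m"
    then obtain c where c: "c \<in> smplx m" "y = comb h m c" by blast
    have "\<forall>k<m. h k \<in> F \<and> c k \<ge> 0" using hb c(1) by (auto simp: bij_betw_def smplx_def)
    moreover have "(\<Sum>k<m. c k) = 1" using c(1) by (simp add: smplx_def)
    ultimately show "y \<in> conv_hull_val F"
      unfolding conv_hull_val_def c(2) comb_def by blast
  qed
next
  show "conv_hull_val F \<subseteq> comb h m ` smplx m"
  proof
    fix y assume "y \<in> conv_hull_val F"
    then obtain n :: nat and c :: "nat \<Rightarrow> real" and g where y: "y = (\<lambda>i U. \<Sum>k<n. ennreal (c k) * g k i U)"
      and gc: "\<forall>k<n. g k \<in> F \<and> c k \<ge> 0" and s1: "(\<Sum>k<n. c k) = (1::real)"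
      unfolding conv_hull_val_def by fastforce
    define \<phi> where "\<phi> j = inv_into {..<m} h (g j)" for j
    have phi: "\<phi> j < m \<and> h (\<phi> j) = g j" if "j < n" for j
    proof -
      have gi: "g j \<in> h ` {..<m}" using gc that hb by (auto simp: bij_betw_def)
      show ?thesis unfolding \<phi>_def using inv_into_into[OF gi] f_inv_into_f[OF gi] by auto
    qed
    define c' where "c' k = (if k < m then (\<Sum>j\<in>{j\<in>{..<n}. \<phi> j = k}. c j) else 0)" for k
    have grp: "(\<Sum>k<m. \<Sum>j\<in>{j\<in>{..<n}. \<phi> j = k}. f j) = (\<Sum>j<n. f j)" for f :: "nat \<Rightarrow> 'z::comm_monoid_add"
      by (rule sum.group) (use phi in auto)
    have "c' \<in> smplx m"
      unfolding smplx_def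
    proof (intro CollectI conjI allI impI)
      fix k
      show "0 \<le> c' k" unfolding c'_def using gc by (auto intro: sum_nonneg)
      have "(\<Sum>j\<in>{j\<in>{..<n}. \<phi> j = k}. c j) \<le> (\<Sum>j<n. c j)"
        by (rule sum_mono2) (use gc in auto)
      then show "c' k \<le> 1" unfolding c'_def using s1 by auto
      show "m \<le> k \<Longrightarrow> c' k = 0" unfolding c'_def by simp
    next
      show "(\<Sum>k<m. c' k) = 1" unfolding c'_def using grp[of c] s1 by simp
    qed
    moreover have "y = comb h m c'"
    proof (intro ext)
      fix i U
      have se: "(\<Sum>j\<in>{j\<in>{..<n}. \<phi> j = k}. ennreal (c j)) = ennreal (\<Sum>j\<in>{j\<in>{..<n}. \<phi> j = k}. c j)" for k
        by (rule sum_ennreal) (use gc in auto)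
      have "comb h m c' i U = (\<Sum>k<m. (\<Sum>j\<in>{j\<in>{..<n}. \<phi> j = k}. ennreal (c j)) * h k i U)"
        unfolding comb_def c'_def using gc by (intro sum.cong refl) (simp add: se[simplified])
      also have "\<dots> = (\<Sum>k<m. \<Sum>j\<in>{j\<in>{..<n}. \<phi> j = k}. ennreal (c j) * g j i U)"
        unfolding sum_distrib_right using phi by (intro sum.cong refl) auto
      also have "\<dots> = y i U" unfolding y by (rule grp)
      finally show "y i U = comb h m c' i U" by simp
    qed
    ultimately show "y \<in> comb h m ` smplx m" by blast
  qed
qed

lemma cont_comb:
  assumes hP: "\<forall>k<m. h k \<in> prod_val I X R" and hB: "\<forall>k<m. \<forall>i U. h k i U \<le> 1"
  shows "continuous_map (subtopology (product_topology (\<lambda>i. euclideanreal) UNIV) (smplx m))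
           (lawson_topology (prod_val I X R) prod_val_le) (comb h m)"
proof -
  let ?PT = "product_topology (\<lambda>i. euclideanreal) (UNIV::nat set)"
  let ?T = "subtopology ?PT (smplx m)"
  let ?P = "prod_val I X R"
  let ?f = "comb h m"
  have tsT: "topspace ?T = smplx m" by (simp add: topspace_product_topology)
  have tsPT: "topspace ?PT = UNIV" by (simp add: topspace_product_topology)
  have fP: "?f c \<in> ?P" for c using comb_in_prod_val[OF hP] .
  have nonneg: "\<forall>k. 0 \<le> c k" if "c \<in> smplx m" for c using that by (simp add: smplx_def)
  show ?thesis
    unfolding lawson_topology_def
  proof (rule continuous_on_generated_topo)
    show "?f ` topspace ?T \<subseteq> \<Union> ({U. scott_open ?P prod_val_le U} \<union> {?P - up_on ?P prod_val_le x |x. x \<in> ?P})"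
      using fP scott_open_whole[of ?P prod_val_le] by blast
  next
    fix U0 assume "U0 \<in> {U. scott_open ?P prod_val_le U} \<union> {?P - up_on ?P prod_val_le x |x. x \<in> ?P}"
    then consider (sc) "scott_open ?P prod_val_le U0" | (cp) x where "x \<in> ?P" "U0 = ?P - up_on ?P prod_val_le x"
      by blast
    then show "openin ?T (?f -` U0 \<inter> topspace ?T)"
    proof cases
      case sc
      show ?thesis
      proof (subst openin_subopen, intro ballI)
        fix c assume "c \<in> ?f -` U0 \<inter> topspace ?T"
        then have c: "c \<in> smplx m" "?f c \<in> U0" using tsT by auto
        have c0: "\<forall>k. 0 \<le> c k" using nonneg[OF c(1)] .
        define D where "D = (\<lambda>t. ?f (\<lambda>k. t * c k)) ` {0<..<(1::real)}"
        have dir: "directed_on ?P prod_val_le D"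
          unfolding directed_on_def
        proof (intro conjI ballI)
          show "D \<noteq> {}" unfolding D_def by (auto intro: exI[of _ "1/2"])
          show "D \<subseteq> ?P" unfolding D_def using fP by blast
        next
          fix x y assume "x \<in> D" "y \<in> D"
          then obtain t1 t2 where t: "t1 \<in> {0<..<1}" "t2 \<in> {0<..<1}"
            "x = ?f (\<lambda>k. t1 * c k)" "y = ?f (\<lambda>k. t2 * c k)" unfolding D_def by blast
          have "max t1 t2 \<in> {0<..<1}" using t by auto
          moreover have "prod_val_le x (?f (\<lambda>k. max t1 t2 * c k))"
            unfolding t(3) using t c0 by (intro comb_mono) (auto intro: mult_right_mono)
          moreover have "prod_val_le y (?f (\<lambda>k. max t1 t2 * c k))"
            unfolding t(4) using t c0 by (intro comb_mono) (auto intro: mult_right_mono)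
          ultimately show "\<exists>z\<in>D. prod_val_le x z \<and> prod_val_le y z" unfolding D_def by blast
        qed
        have lub: "is_lub_on ?P prod_val_le D (?f c)"
          unfolding is_lub_on_def
        proof (intro conjI ballI impI)
          show "?f c \<in> ?P" by (rule fP)
        next
          fix d assume "d \<in> D"
          then obtain t where t: "t \<in> {0<..<1}" "d = ?f (\<lambda>k. t * c k)" unfolding D_def by blast
          show "prod_val_le d (?f c)" unfolding t(2) using t c0
            by (intro comb_mono) (auto intro: mult_left_le_one_le)
        next
          fix u assume u: "u \<in> ?P" "\<forall>d\<in>D. prod_val_le d u"
          show "prod_val_le (?f c) u"
            unfolding prod_val_le_def
          proof (intro allI)
            fix i U
            define a where "a = (\<Sum>k<m. c k * enn2real (h k i U))"
            have a0: "0 \<le> a" unfolding a_def using c0 by (auto intro!: sum_nonneg)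
            have fa: "?f c i U = ennreal a" unfolding a_def using comb_real[OF c0 hB] .
            have ft: "ennreal (t * a) \<le> u i U" if "t \<in> {0<..<1}" for t
            proof -
              have "prod_val_le (?f (\<lambda>k. t * c k)) u" using u(2) that unfolding D_def by blast
              then have "?f (\<lambda>k. t * c k) i U \<le> u i U" unfolding prod_val_le_def by blast
              moreover have "?f (\<lambda>k. t * c k) i U = ennreal (t * a)"
                using comb_real[of "\<lambda>k. t * c k" m h i U] that c0 hB
                unfolding a_def by (simp add: sum_distrib_left mult.assoc)
              ultimately show ?thesis by simp
            qed
            show "?f c i U \<le> u i U"
            proof (cases "u i U = top")
              case True then show ?thesis by simp
            next
              case False
              then obtain b where b: "u i U = ennreal b" "0 \<le> b"
                by (metis ennreal_cases top_neq_ennreal)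
              have "a \<le> b"
              proof (rule field_le_mult_one_interval)
                fix z :: real assume "0 < z" "z < 1"
                then have "ennreal (z * a) \<le> ennreal b" using ft b by auto
                then show "z * a \<le> b" using b(2) by simp
              qed
              then show ?thesis using fa b by simp
            qed
          qed
        qed
        have "D \<inter> U0 \<noteq> {}" using sc dir lub c(2) unfolding scott_open_def by blast
        then obtain t where t: "t \<in> {0<..<1}" "?f (\<lambda>k. t * c k) \<in> U0" unfolding D_def by blast
        define K where "K = {k. k < m \<and> 0 < c k}"
        define W where "W = (\<Inter>k\<in>K. {x. t * c k < x k}) \<inter> topspace ?PT"
        have "openin ?PT W" unfolding W_def
        proof (rule openin_INT)
          show "finite K" unfolding K_def by simp
          fix k
          have "openin ?PT {x \<in> topspace ?PT. x k \<in> {t * c k<..}}"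
            by (rule openin_continuous_map_preimage[OF continuous_map_product_projection]) auto
          then show "openin ?PT {x. t * c k < x k}" using tsPT by simp
        qed
        then have oW: "openin ?T (W \<inter> smplx m)" by (auto simp: openin_subtopology)
        have cW: "c \<in> W \<inter> smplx m" using c(1) t unfolding W_def K_def tsPT by auto
        have "W \<inter> smplx m \<subseteq> ?f -` U0 \<inter> topspace ?T"
        proof
          fix x assume x: "x \<in> W \<inter> smplx m"
          have x0: "\<forall>k. 0 \<le> x k" using nonneg x by blast
          have "prod_val_le (?f (\<lambda>k. t * c k)) (?f x)"
          proof (rule comb_mono, intro allI impI conjI)
            fix k assume "k < m"
            show "0 \<le> t * c k" using t c0 by simp
            show "t * c k \<le> x k"
            proof (cases "0 < c k")
              case True then show ?thesis using x \<open>k < m\<close> unfolding W_def K_def by auto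
            next
              case False then have "c k = 0" using c0[rule_format, of k] by linarith
              then show ?thesis using x0 by simp
            qed
          qed
          then have "?f x \<in> U0" using sc t(2) fP unfolding scott_open_def upper_set_on_def by blast
          then show "x \<in> ?f -` U0 \<inter> topspace ?T" using x tsT by auto
        qed
        then show "\<exists>T. openin ?T T \<and> c \<in> T \<and> T \<subseteq> ?f -` U0 \<inter> topspace ?T"
          using oW cW by blast
      qed
    next
      case cp
      define r where "r i U c = (\<Sum>k<m. c k * enn2real (h k i U))" for i U and c :: "nat \<Rightarrow> real"
      have eq: "?f -` U0 \<inter> topspace ?T = (\<Union>(i,U)\<in>UNIV. {c \<in> topspace ?T. ennreal (r i U c) < x i U})"
      proof -
        have "c \<in> ?f -` U0 \<longleftrightarrow> (\<exists>i U. ennreal (r i U c) < x i U)" if "c \<in> smplx m" for c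
        proof -
          have "c \<in> ?f -` U0 \<longleftrightarrow> \<not> prod_val_le x (?f c)"
            using cp fP unfolding up_on_def by auto
          also have "\<dots> \<longleftrightarrow> (\<exists>i U. ?f c i U < x i U)" unfolding prod_val_le_def by (auto simp: not_le)
          finally show ?thesis unfolding r_def using comb_real[OF nonneg[OF that] hB] by simp
        qed
        then show ?thesis using tsT by auto
      qed
      show ?thesis unfolding eq
      proof (rule openin_Union, clarify)
        fix i U
        have cr: "continuous_map ?T euclideanreal (r i U)"
          unfolding r_def
          by (intro continuous_map_sum continuous_map_real_mult_right
              continuous_map_from_subtopology continuous_map_product_projection) auto
        show "openin ?T {c \<in> topspace ?T. ennreal (r i U c) < x i U}"
        proof (cases "x i U = top")
          case True then show ?thesis using openin_topspace[of ?T] by simp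
        next
          case False
          then obtain b where b: "x i U = ennreal b" "0 \<le> b"
            by (metis ennreal_cases top_neq_ennreal)
          have "{c \<in> topspace ?T. ennreal (r i U c) < x i U} = {c \<in> topspace ?T. r i U c \<in> {..<b}}"
          proof -
            have "ennreal (r i U c) < x i U \<longleftrightarrow> r i U c < b" if "c \<in> topspace ?T" for c
            proof -
              have "0 \<le> r i U c" unfolding r_def using nonneg that tsT by (auto intro!: sum_nonneg)
              then show ?thesis using b ennreal_less_iff by simp
            qed
            then show ?thesis by auto
          qed
          then show ?thesis using openin_continuous_map_preimage[OF cr, of "{..<b}"] by simp
        qed
      qed
    qed
  qed
qed

theorem mainTheorem15:
  fixes I :: "'i set" and X :: "'i \<Rightarrow> 'a set" and R :: "'i \<Rightarrow> 'a \<Rightarrow> 'a \<Rightarrow> bool"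
    and F :: "('i \<Rightarrow> 'a set \<Rightarrow> ennreal) set"
  assumes dom: "\<forall>i\<in>I. domain_on (X i) (R i)"
    and coh: "\<forall>i\<in>I. coherent_top (scott_topology (X i) (R i))"
    and zd: "\<forall>i\<in>I. zero_dimensional_top (scott_topology (X i) (R i))"
    and finF: "finite F"
    and FV: "F \<subseteq> prod_val I X R"
    and F1: "\<forall>\<nu>\<in>F. \<forall>i\<in>I. \<nu> i (X i) \<le> 1"
  shows "compactin (lawson_topology (prod_val I X R) prod_val_le) (conv_hull_val F)"
proof -
  obtain h where hb0: "bij_betw h {0..<card F} F" using ex_bij_betw_nat_finite[OF finF] by blast
  define m where "m = card F"
  have hb: "bij_betw h {..<m} F" using hb0 unfolding m_def by (simp add: atLeast0LessThan)
  have hF: "\<forall>k<m. h k \<in> F" using hb by (auto simp: bij_betw_def)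
  have hP: "\<forall>k<m. h k \<in> prod_val I X R" using hF FV by blast
  have hB: "\<forall>k<m. \<forall>i U. h k i U \<le> 1"
  proof (intro allI impI)
    fix k i U assume "k < m"
    then have "h k \<in> prod_val I X R" "\<forall>i\<in>I. h k i (X i) \<le> 1" using hF hP F1 by auto
    then show "h k i U \<le> 1" by (rule prod_val_bound)
  qed
  have "compactin (subtopology (product_topology (\<lambda>i. euclideanreal) UNIV) (smplx m)) (smplx m)"
    using compactin_smplx by (simp add: compactin_subtopology)
  then have "compactin (lawson_topology (prod_val I X R) prod_val_le) (comb h m ` smplx m)"
    by (rule image_compactin[OF _ cont_comb[OF hP hB]])
  then show ?thesis unfolding conv_eq[OF hb] .
qed

end
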